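(* Let $n\ge 1$, and let $a_0,a_1,\dots,a_{n-1}$ and $b_1,\dots,b_{n-1}$ be positive integers. Define $p_0=a_0$, $p_1=a_0a_1+b_1$, and $p_k=a_kp_{k-1}+b_kp_{k-2}$ for $k\ge 2$ (so $p_{n-1}/q_{n-1}$ is the value of the generalized continued fraction $a_0+\cfrac{b_1}{a_1+\cfrac{b_2}{\ddots+\cfrac{b_{n-1}}{a_{n-1}}}}$, where $q_0=1$, $q_1=a_1$, $q_k=a_kq_{k-1}+b_kq_{k-2}$; $p_{n-1},q_{n-1}$ need not be coprime). Then $$Z\bigl(D_n(a_0,a_1,\dots,a_{n-1};\,b_1,\dots,b_{n-1})\bigr)=p_{n-1}.$$
   Context: Graphs may have parallel edges, regarded as distinct. For a (multi)graph $G$, $p(G,k)$ is the number of sets of $k$ pairwise disjoint edges (no two sharing an endpoint), $p(G,0)=1$, and $Z(G)=\sum_{k\ge0}p(G,k)$ (Hosoya index). For positive integers $x_1,\dots,x_n$ and $y_1,\dots,y_{n-1}$, the caterpillar-bond graph $D_n(x_1,\dots,x_n;y_1,\dots,y_{n-1})$ is the multigraph obtained as follows: take vertices $v_1,\dots,v_n$; for each $i=1,\dots,n-1$ join $v_i$ and $v_{i+1}$ by exactly $y_i$ parallel edges; and for each $i=1,\dots,n$ attach $x_i-1$ new pendant vertices, each joined to $v_i$ by a single edge. There are no other vertices or edges. *)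

theory Defs
  imports Main
begin

text \<open>A multigraph is given by a finite set of edge labels E and an endpoint map
  ends (parallel edges are distinct labels with the same endpoints).\<close>

definition matchings :: "'e set \<Rightarrow> ('e \<Rightarrow> 'v set) \<Rightarrow> 'e set set" where
  "matchings E ends = {M. M \<subseteq> E \<and> (\<forall>e\<in>M. \<forall>f\<in>M. e \<noteq> f \<longrightarrow> ends e \<inter> ends f = {})}"

definition pmatch :: "'e set \<Rightarrow> ('e \<Rightarrow> 'v set) \<Rightarrow> nat \<Rightarrow> nat" where
  "pmatch E ends k = card {M \<in> matchings E ends. card M = k}"

text \<open>Hosoya index Z(G) = sum over k >= 0 of p(G,k); p(G,k) = 0 for k > |E|.\<close>
definition hosoya :: "'e set \<Rightarrow> ('e \<Rightarrow> 'v set) \<Rightarrow> nat" where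
  "hosoya E ends = (\<Sum>k\<le>card E. pmatch E ends k)"

text \<open>Caterpillar-bond graph D_n(a_0..a_{n-1}; b_1..b_{n-1}): spine vertices Sp 0..Sp (n-1);
  Sp (i-1) and Sp i joined by b i parallel edges (1 <= i < n); a i - 1 pendant vertices Pd i j at Sp i.\<close>
datatype cvert = Sp nat | Pd nat nat
datatype cedge = Bond nat nat | Leaf nat nat

definition cat_vertices :: "nat \<Rightarrow> (nat \<Rightarrow> nat) \<Rightarrow> cvert set" where
  "cat_vertices n a = {Sp i | i. i < n} \<union> {Pd i j | i j. i < n \<and> j < a i - 1}"

definition cat_edges :: "nat \<Rightarrow> (nat \<Rightarrow> nat) \<Rightarrow> (nat \<Rightarrow> nat) \<Rightarrow> cedge set" where
  "cat_edges n a b = {Bond i k | i k. 1 \<le> i \<and> i < n \<and> k < b i}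
                   \<union> {Leaf i j | i j. i < n \<and> j < a i - 1}"

fun cat_ends :: "cedge \<Rightarrow> cvert set" where
  "cat_ends (Bond i k) = {Sp (i - 1), Sp i}"
| "cat_ends (Leaf i j) = {Sp i, Pd i j}"

fun cf_p :: "(nat \<Rightarrow> nat) \<Rightarrow> (nat \<Rightarrow> nat) \<Rightarrow> nat \<Rightarrow> nat" where
  "cf_p a b 0 = a 0"
| "cf_p a b (Suc 0) = a 0 * a 1 + b 1"
| "cf_p a b (Suc (Suc k)) = a (k + 2) * cf_p a b (k + 1) + b (k + 2) * cf_p a b k"

end

theory Submission
  imports Defs
begin

fun idx :: "cvert \<Rightarrow> nat" where
  "idx (Sp i) = i" | "idx (Pd i j) = i"

lemma edges_Suc:
  "cat_edges (Suc m) a b = cat_edges m a b \<union> Leaf m ` {..<a m - 1}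
     \<union> (if 1 \<le> m then Bond m ` {..<b m} else {})"
  unfolding cat_edges_def by (auto simp: less_Suc_eq)

lemma edges_0: "cat_edges 0 a b = {}"
  unfolding cat_edges_def by auto

lemma finite_edges: "finite (cat_edges m a b)"
  by (induction m) (auto simp: edges_0 edges_Suc)

lemma idx_lt: "e \<in> cat_edges m a b \<Longrightarrow> v \<in> cat_ends e \<Longrightarrow> idx v < m"
  unfolding cat_edges_def by auto

lemma mem_edges_avoid:
  assumes "e \<in> cat_edges m a b" "Sp (m - 1) \<notin> cat_ends e"
  shows "e \<in> cat_edges (m - 1) a b"
proof (cases e)
  case (Bond i k) then show ?thesis using assms unfolding cat_edges_def
    by (cases "i = m - 1") auto
next
  case (Leaf i j) then show ?thesis using assms unfolding cat_edges_def
    by (cases "i = m - 1") auto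
qed

lemma finite_matchings: "finite E \<Longrightarrow> finite (matchings E ends)"
  unfolding matchings_def by (rule finite_subset[of _ "Pow E"]) auto

lemma card_ins:
  assumes "finite A" "finite S" "\<And>M. M \<in> S \<Longrightarrow> M \<inter> A = {}"
  shows "card ((\<lambda>(e,M). insert e M) ` (A \<times> S)) = card A * card S"
proof -
  have "inj_on (\<lambda>(e,M). insert e M) (A \<times> S)"
  proof (rule inj_onI, clarify)
    fix e M e' M'
    assume h: "e \<in> A" "M \<in> S" "e' \<in> A" "M' \<in> S" "insert e M = insert e' M'"
    have "e \<notin> M" "e' \<notin> M'" "e \<notin> M'" "e' \<notin> M" using assms(3) h by blast+
    then have "e = e'" using h(5) by blast
    then show "e = e' \<and> M = M'" using h(5) \<open>e \<notin> M\<close> \<open>e' \<notin> M'\<close>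
      by (metis Diff_insert_absorb)
  qed
  then show ?thesis by (simp add: card_image card_cartesian_product)
qed

lemma nonempty_witness: "A \<noteq> {} \<Longrightarrow> (\<And>x. x \<in> A \<Longrightarrow> thesis) \<Longrightarrow> thesis"
  by blast

lemma matchings_mono: "M \<in> matchings E ends \<Longrightarrow> E \<subseteq> F \<Longrightarrow> M \<in> matchings F ends"
  unfolding matchings_def by auto

lemma ins_match:
  assumes "M \<in> matchings E ends" "e \<in> F" "E \<subseteq> F" "\<forall>f\<in>M. ends e \<inter> ends f = {}"
  shows "insert e M \<in> matchings F ends"
  using assms unfolding matchings_def by (auto simp: Int_commute)

lemma matchings_Suc:
  "matchings (cat_edges (Suc m) a b) cat_ends =
     matchings (cat_edges m a b) cat_ends
   \<union> (\<lambda>(e,M). insert e M) ` (Leaf m ` {..<a m - 1} \<times> matchings (cat_edges m a b) cat_ends)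
   \<union> (\<lambda>(e,M). insert e M) ` ((if 1 \<le> m then Bond m ` {..<b m} else {}) \<times> matchings (cat_edges (m-1) a b) cat_ends)"
  (is "?L = ?A \<union> ?B \<union> ?C")
proof
  show "?A \<union> ?B \<union> ?C \<subseteq> ?L"
  proof -
    have "cat_edges m a b \<subseteq> cat_edges (Suc m) a b" unfolding edges_Suc by blast
    then have "?A \<subseteq> ?L" using matchings_mono by blast
    moreover have "?B \<subseteq> ?L"
    proof clarify
      fix j M assume j: "j < a m - 1" and M: "M \<in> matchings (cat_edges m a b) cat_ends"
      have sub: "M \<subseteq> cat_edges m a b" using M unfolding matchings_def by auto
      have "\<forall>f\<in>M. cat_ends (Leaf m j) \<inter> cat_ends f = {}"
      proof
        fix f assume "f \<in> M"
        then have "\<forall>v\<in>cat_ends f. idx v < m" using idx_lt sub by blast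
        then show "cat_ends (Leaf m j) \<inter> cat_ends f = {}" by auto
      qed
      moreover have "Leaf m j \<in> cat_edges (Suc m) a b" using j unfolding edges_Suc by blast
      moreover have "cat_edges m a b \<subseteq> cat_edges (Suc m) a b" unfolding edges_Suc by blast
      ultimately show "insert (Leaf m j) M \<in> ?L" by (intro ins_match[OF M]) auto
    qed
    moreover have "?C \<subseteq> ?L"
    proof clarify
      fix e M assume e: "e \<in> (if 1 \<le> m then Bond m ` {..<b m} else {})"
        and M: "M \<in> matchings (cat_edges (m-1) a b) cat_ends"
      obtain k where m: "1 \<le> m" and k: "k < b m" and ek: "e = Bond m k" using e
        by (auto split: if_splits)
      have sub: "M \<subseteq> cat_edges (m-1) a b" using M unfolding matchings_def by auto
      have sub2: "cat_edges (m-1) a b \<subseteq> cat_edges m a b"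
        using m unfolding cat_edges_def by auto
      have "\<forall>f\<in>M. cat_ends e \<inter> cat_ends f = {}"
      proof
        fix f assume "f \<in> M"
        then have "\<forall>v\<in>cat_ends f. idx v < m - 1" using idx_lt sub by blast
        then show "cat_ends e \<inter> cat_ends f = {}" using ek by auto
      qed
      moreover have "e \<in> cat_edges (Suc m) a b" using e unfolding edges_Suc by blast
      moreover have "cat_edges m a b \<subseteq> cat_edges (Suc m) a b" unfolding edges_Suc by blast
      ultimately show "insert e M \<in> ?L" by (intro ins_match[OF M]) (use sub2 in auto)
    qed
    ultimately show ?thesis by blast
  qed
next
  show "?L \<subseteq> ?A \<union> ?B \<union> ?C"
  proof
    fix M assume M: "M \<in> ?L"
    have sub: "M \<subseteq> cat_edges (Suc m) a b" and pw: "\<forall>e\<in>M. \<forall>f\<in>M. e \<noteq> f \<longrightarrow> cat_ends e \<inter> cat_ends f = {}"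
      using M unfolding matchings_def by auto
    show "M \<in> ?A \<union> ?B \<union> ?C"
    proof (cases "M \<subseteq> cat_edges m a b")
      case True then have "M \<in> ?A" using pw unfolding matchings_def by blast
      then show ?thesis by blast
    next
      case False
      then obtain e where eM: "e \<in> M" and en: "e \<notin> cat_edges m a b" by auto
      have "e \<in> cat_edges (Suc m) a b" using eM sub by blast
      then have "e \<in> cat_edges m a b \<union> Leaf m ` {..<a m - 1} \<union> (if 1 \<le> m then Bond m ` {..<b m} else {})"
        by (simp only: edges_Suc)
      then have eN: "e \<in> Leaf m ` {..<a m - 1} \<union> (if 1 \<le> m then Bond m ` {..<b m} else {})"
        using en by blast
      have Spe: "Sp m \<in> cat_ends e" using eN by (auto split: if_splits)
      have rest: "\<forall>f\<in>M - {e}. cat_ends e \<inter> cat_ends f = {}" using pw eM by blast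
      have notm: "f \<in> M - {e} \<Longrightarrow> f \<in> cat_edges m a b" for f
      proof -
        assume f: "f \<in> M - {e}"
        have "Sp m \<notin> cat_ends f" using rest f Spe by blast
        moreover have "f \<in> cat_edges (Suc m) a b" using f sub by auto
        then have "f \<in> cat_edges m a b \<union> Leaf m ` {..<a m - 1} \<union> (if 1 \<le> m then Bond m ` {..<b m} else {})"
          by (simp only: edges_Suc)
        ultimately show ?thesis by (auto split: if_splits)
      qed
      have Me: "M = insert e (M - {e})" using eM by auto
      show ?thesis
      proof (cases "e \<in> Leaf m ` {..<a m - 1}")
        case True
        have "M - {e} \<in> matchings (cat_edges m a b) cat_ends"
          using notm pw unfolding matchings_def by auto
        then have "M \<in> ?B"
          by (intro image_eqI[where x="(e, M - {e})"] SigmaI) (use True Me in simp_all)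
        then show ?thesis by blast
      next
        case False
        then have eB: "e \<in> (if 1 \<le> m then Bond m ` {..<b m} else {})" using eN by blast
        then have m: "1 \<le> m" by (auto split: if_splits)
        have Spe': "Sp (m-1) \<in> cat_ends e" using eB by (auto split: if_splits)
        have "f \<in> cat_edges (m-1) a b" if f: "f \<in> M - {e}" for f
        proof -
          have "Sp (m-1) \<notin> cat_ends f" using rest f Spe' by blast
          then show ?thesis using mem_edges_avoid notm f by blast
        qed
        then have "M - {e} \<in> matchings (cat_edges (m-1) a b) cat_ends"
          using pw unfolding matchings_def by auto
        then have "M \<in> ?C"
          by (intro image_eqI[where x="(e, M - {e})"] SigmaI) (use eB Me in simp_all)
        then show ?thesis by blast
      qed
    qed
  qed
qed

definition T :: "(nat \<Rightarrow> nat) \<Rightarrow> (nat \<Rightarrow> nat) \<Rightarrow> nat \<Rightarrow> nat" where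
  "T a b m = card (matchings (cat_edges m a b) cat_ends)"

lemma T_0: "T a b 0 = 1"
proof -
  have "matchings {} cat_ends = {{}}" unfolding matchings_def by auto
  then show ?thesis unfolding T_def edges_0 by simp
qed

lemma T_Suc: "T a b (Suc m) = (1 + (a m - 1)) * T a b m + (if 1 \<le> m then b m else 0) * T a b (m - 1)"
proof -
  let ?A = "matchings (cat_edges m a b) cat_ends"
  let ?L = "Leaf m ` {..<a m - 1}"
  let ?Bd = "(if 1 \<le> m then Bond m ` {..<b m} else {})"
  let ?A' = "matchings (cat_edges (m-1) a b) cat_ends"
  let ?B = "(\<lambda>(e,M). insert e M) ` (?L \<times> ?A)"
  let ?C = "(\<lambda>(e,M). insert e M) ` (?Bd \<times> ?A')"
  have fA: "finite ?A" "finite ?A'" using finite_matchings finite_edges by blast+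
  have fB: "finite ?B" "finite ?C" using fA by auto
  have subA: "M \<in> ?A \<Longrightarrow> M \<subseteq> cat_edges m a b" for M unfolding matchings_def by auto
  have subA': "M \<in> ?A' \<Longrightarrow> M \<subseteq> cat_edges (m-1) a b" for M unfolding matchings_def by auto
  have nL: "x \<in> ?L \<Longrightarrow> x \<notin> cat_edges m a b" for x unfolding cat_edges_def by auto
  have nB: "x \<in> ?Bd \<Longrightarrow> x \<notin> cat_edges m a b" for x unfolding cat_edges_def by (auto split: if_splits)
  have nB': "x \<in> ?Bd \<Longrightarrow> x \<notin> cat_edges (m-1) a b" for x unfolding cat_edges_def by (auto split: if_splits)
  have iB: "M \<in> ?A \<Longrightarrow> M \<inter> ?L = {}" for M using subA nL by blast
  have iC: "M \<in> ?A' \<Longrightarrow> M \<inter> ?Bd = {}" for M using subA' nB' by blast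
  have cB: "card ?B = card ?L * card ?A"
    by (rule card_ins[OF _ fA(1) iB]) simp
  have cC: "card ?C = card ?Bd * card ?A'"
    by (rule card_ins[OF _ fA(2) iC]) simp
  have d1: "?A \<inter> ?B = {}" using subA nL by fastforce
  have d2: "(?A \<union> ?B) \<inter> ?C = {}"
  proof -
    have "?A \<inter> ?C = {}" using subA nB by fastforce
    moreover have "?B \<inter> ?C = {}"
    proof (rule ccontr)
      assume "?B \<inter> ?C \<noteq> {}"
      then obtain x where x0: "x \<in> ?B \<inter> ?C" by (rule nonempty_witness)
      have x: "x \<in> ?B" "x \<in> ?C" using x0 by (rule IntD1, rule IntD2)
      from x(1) obtain p where p: "p \<in> ?L \<times> ?A" "x = (\<lambda>(e,M). insert e M) p" by (rule imageE)
      from x(2) obtain q where q: "q \<in> ?Bd \<times> ?A'" "x = (\<lambda>(e,M). insert e M) q" by (rule imageE)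
      obtain e M where pe: "p = (e, M)" by (cases p)
      obtain e' M' where qe: "q = (e', M')" by (cases q)
      have h: "e \<in> ?L" "M \<in> ?A" "e' \<in> ?Bd" "M' \<in> ?A'" "insert e M = insert e' M'"
        using p q pe qe by simp_all
      have "e' \<in> insert e M" using h(5) by auto
      moreover have "e' \<noteq> e" using h(1,3) by (auto split: if_splits)
      ultimately have "e' \<in> M" by blast
      then show False using h(2,3) subA nB by blast
    qed
    ultimately show ?thesis by (simp only: Int_Un_distrib2 Un_empty)
  qed
  have cL: "card ?L = a m - 1" by (simp add: card_image inj_on_def)
  have cBd: "card ?Bd = (if 1 \<le> m then b m else 0)" by (simp add: card_image inj_on_def)
  have u1: "card (?A \<union> ?B) = card ?A + card ?B" by (rule card_Un_disjoint[OF fA(1) fB(1) d1])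
  have fAB: "finite (?A \<union> ?B)" by (rule finite_UnI[OF fA(1) fB(1)])
  have u2: "card (?A \<union> ?B \<union> ?C) = card (?A \<union> ?B) + card ?C" by (rule card_Un_disjoint[OF fAB fB(2) d2])
  have "T a b (Suc m) = card ?A + card ?L * card ?A + card ?Bd * card ?A'"
    unfolding T_def matchings_Suc u2 u1 cB cC by (rule refl)
  then show ?thesis unfolding cL cBd T_def by (simp add: algebra_simps)
qed

lemma hosoya_card:
  assumes "finite E" shows "hosoya E ends = card (matchings E ends)"
proof -
  have fm: "finite (matchings E ends)" using finite_matchings assms by blast
  have "matchings E ends = (\<Union>k\<in>{..card E}. {M \<in> matchings E ends. card M = k})"
  proof -
    have "M \<in> matchings E ends \<Longrightarrow> card M \<le> card E" for M
      using assms card_mono unfolding matchings_def by auto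
    then show ?thesis by auto
  qed
  moreover have "card (\<Union>k\<in>{..card E}. {M \<in> matchings E ends. card M = k}) = (\<Sum>k\<le>card E. card {M \<in> matchings E ends. card M = k})"
    by (rule card_UN_disjoint) (use fm in auto)
  ultimately have "card (matchings E ends) = (\<Sum>k\<le>card E. card {M \<in> matchings E ends. card M = k})"
    by simp
  then show ?thesis unfolding hosoya_def pmatch_def by simp
qed

lemma T_cf: "(\<forall>i\<le>k. a i > 0) \<Longrightarrow> T a b (Suc k) = cf_p a b k"
proof (induction k rule: less_induct)
  case (less k)
  show ?case
  proof (cases k)
    case 0
    then show ?thesis using less.prems T_Suc[of a b 0] T_0[of a b] by simp
  next
    case (Suc j)
    show ?thesis
    proof (cases j)
      case 0
      then show ?thesis using Suc less.prems T_Suc[of a b 1] T_Suc[of a b 0] T_0[of a b] by simp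
    next
      case (Suc i)
      have k: "k = Suc (Suc i)" using Suc \<open>k = Suc j\<close> by simp
      have ih1: "T a b (Suc (Suc i)) = cf_p a b (Suc i)" using less k by simp
      have ih2: "T a b (Suc i) = cf_p a b i" using less k by simp
      have "a (i+2) > 0" using less.prems k by simp
      then show ?thesis using T_Suc[of a b "Suc (Suc i)"] ih1 ih2 k
        by (simp add: algebra_simps)
    qed
  qed
qed

theorem theorem2:
  fixes n :: nat and a b :: "nat \<Rightarrow> nat"
  assumes "n \<ge> 1"
    and "\<forall>i<n. a i > 0"
    and "\<forall>i. 1 \<le> i \<and> i < n \<longrightarrow> b i > 0"
  shows "hosoya (cat_edges n a b) cat_ends = cf_p a b (n - 1)"
proof -
  have "T a b (Suc (n-1)) = cf_p a b (n-1)"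
    by (rule T_cf) (use assms in auto)
  moreover have "Suc (n-1) = n" using assms(1) by simp
  ultimately have "card (matchings (cat_edges n a b) cat_ends) = cf_p a b (n-1)" unfolding T_def by simp
  then show ?thesis by (simp add: hosoya_card[OF finite_edges])
qed

end
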